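(* Let $M_I$ be a prefactor system and $M$ a target for it, and let $M_{\bar I}$ be the resulting compactification (a prefactor system on $\bar I=I\cup\{top\}$). (1) If $M_I$ is stable and $M$ is maximal over $M_I$, then $M_{\bar I}$ is stable. (2) If $M_I$ is direct and $M$ is extensional over $M_I$, then $M_{\bar I}$ is direct, and for every $a\in M$ the set $I_a$ contains a non-empty upward closed subset of $I$. (3) If $M_I$ is inverse and $M$ is maximal over $M_I$, then $M_{\bar I}$ is inverse, and $I_a=I$ for every $a\in M$.
   Context: Let $(I,\le)$ be a non-empty directed preordered set and $\mathcal F(I)$ a family of subsets of $I$, each cofinal in $I$, closed under supersets and finite intersections, and containing all non-empty upward closed subsets. A system $(M_I,\triangleright)$: sets $M_i$ ($i\in I$, pairwise disjoint) with relations $\triangleright\subseteq M_{i'}\times M_i$ for $i\le i'$, reflexive for $i=i'$. $a_i\approx b_j$ iff some $c\in M_{i'}$, $i'\ge i,j$, has $c\triangleright a_i$ and $c\triangleright b_j$. Prefactor system: $a_{i'}\approx a_i\iff a_{i'}\triangleright a_i$ for $i\le i'$. Stable: $a_{i'}\triangleright a_i\approx b_i$ implies $a_{i'}\triangleright b_i$. $\approx$-embeddings: $\approx$-preserving maps $emb_{i,i'}:M_i\to M_{i'}$ with $emb_{i,i}(a)\approx a$, $emb_{i',i''}(emb_{i,i'}(a))\approx emb_{i,i''}(a)$; coherent if $a_{i'}\triangleright a_i\Rightarrow emb_{i',i''}(a_{i'})\triangleright a_i$ ($i\le i'\le i''$). $\approx$-projections: $\approx$-preserving maps $proj_{i',i}:M_{i'}\to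 M_i$ with $proj_{i,i}(a)\approx a$, $proj_{i',i}(proj_{i'',i'}(a))\approx proj_{i'',i}(a)$; coherent if $a_{i''}\triangleright a_i\Rightarrow proj_{i'',i'}(a_{i''})\triangleright a_i$. Direct: prefactor system with coherent $\approx$-embeddings such that $a_{i'}\triangleright a_i\iff a_{i'}\approx emb_{i,i'}(a_i)$. Inverse: prefactor system with coherent $\approx$-projections such that $a_{i'}\triangleright a_i\iff proj_{i',i}(a_{i'})\approx a_i$ (these notions make sense for any index set, in particular for $\bar I$). Target and compactification: a target for $M_I$ is a set $M$ with a relation $a\triangleright a_i$ between $a\in M$ and elements $a_i\in M_i$, such that $I_a:=\{i\in I\mid\exists a_i\in M_i,\ a\triangleright a_i\}\in\mathcal F(I)$ for all $a\in M$, and such that the compactification $M_{\bar I}$ — index set $\bar I=I\cup\{top\}$ with $top$ a new greatest element, $M_{top}=M$, the relation $\triangleright$ on $M\times M$ being equality — is again a prefactor system, i.e. $a\triangleright a_{i'}$ and $a\triangleright a_i$ imply $a_{i'}\triangleright a_i$ ($i\le i'$). If $M_I$ carries embeddings (resp. projections), the target additionally carries maps $Emb_i=emb_{i,top}:M_i\to M$ (resp. $Proj_i=proj_{top,i}:M\to M_i$) making $M_{\bar I}$ a prefactor system with coherent $\approx$-embeddings (resp. projections) extending those of $M_I$; in particular $Emb_{i'}(emb_{i,i'}(a_i))=Emb_i(a_i)$ and $a_{i'}\triangleright a_i\Rightarrow Emb_{i'}(a_{i'})\triangleright a_i$, resp. $proj_{i',i}(Proj_{i'}(a))\approx Proj_i(a)$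 and $a\triangleright a_i\Rightarrow Proj_{i'}(a)\triangleright a_i$ ($i\le i'$); here $Proj_i(a)$ may be taken as $proj_{i',i}(a_{i'})$ for any $i'\ge i$ with $a\triangleright a_{i'}$. A consistent set is $\alpha\subseteq\bigcup_iM_i$ with $a_{i'}\triangleright a_i$ for all its elements $a_{i'}\in M_{i'}$, $a_i\in M_i$, $i'\ge i$, and $\{i\mid\alpha\cap M_i\ne\emptyset\}\in\mathcal F(I)$. For $a\in M$, $Ext(a):=\{a_i\in\bigcup_iM_i\mid a\triangleright a_i\}$ (a consistent set). Two consistent sets $\alpha,\beta$ satisfy $\alpha\sim\beta$ iff $a_i\approx b_j$ for all $a_i\in\alpha$, $b_j\in\beta$. $M$ is maximal over $M_I$ iff $Ext(a)$ is an inclusion-maximal consistent set for every $a\in M$; $M$ is extensional over $M_I$ iff $Ext(a)\sim Ext(b)$ implies $a=b$. *)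

theory Defs
  imports Main
begin

text \<open>The index set I is the whole type 'i, preordered by le.\<close>

definition upclosed :: "('i \<Rightarrow> 'i \<Rightarrow> bool) \<Rightarrow> 'i set \<Rightarrow> bool" where
  "upclosed le S \<longleftrightarrow> (\<forall>i j. i \<in> S \<longrightarrow> le i j \<longrightarrow> j \<in> S)"

definition index_family :: "('i \<Rightarrow> 'i \<Rightarrow> bool) \<Rightarrow> 'i set set \<Rightarrow> bool" where
  "index_family le F \<longleftrightarrow>
     (\<forall>i. le i i) \<and> (\<forall>i j k. le i j \<longrightarrow> le j k \<longrightarrow> le i k) \<and>
     (\<forall>i j. \<exists>k. le i k \<and> le j k) \<and>
     (\<forall>S\<in>F. \<forall>i. \<exists>j\<in>S. le i j) \<and>
     (\<forall>S T. S \<in> F \<longrightarrow> S \<subseteq> T \<longrightarrow> T \<in> F) \<and>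
     (\<forall>S T. S \<in> F \<longrightarrow> T \<in> F \<longrightarrow> S \<inter> T \<in> F) \<and>
     (\<forall>S. S \<noteq> {} \<longrightarrow> upclosed le S \<longrightarrow> S \<in> F)"

definition sys :: "('j \<Rightarrow> 'j \<Rightarrow> bool) \<Rightarrow> ('j \<Rightarrow> 'x set) \<Rightarrow> ('x \<Rightarrow> 'x \<Rightarrow> bool) \<Rightarrow> bool" where
  "sys le Ms tr \<longleftrightarrow>
     (\<forall>i j. i \<noteq> j \<longrightarrow> Ms i \<inter> Ms j = {}) \<and>
     (\<forall>x y. tr x y \<longrightarrow> (\<exists>i i'. le i i' \<and> x \<in> Ms i' \<and> y \<in> Ms i)) \<and>
     (\<forall>i. \<forall>x\<in>Ms i. tr x x)"

definition eqv :: "('j \<Rightarrow> 'j \<Rightarrow> bool) \<Rightarrow> ('j \<Rightarrow> 'x set) \<Rightarrow> ('x \<Rightarrow> 'x \<Rightarrow> bool) \<Rightarrow> 'x \<Rightarrow> 'x \<Rightarrow> bool" where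
  "eqv le Ms tr x y \<longleftrightarrow>
     (\<exists>i j k c. x \<in> Ms i \<and> y \<in> Ms j \<and> le i k \<and> le j k \<and> c \<in> Ms k \<and> tr c x \<and> tr c y)"

definition prefactor :: "('j \<Rightarrow> 'j \<Rightarrow> bool) \<Rightarrow> ('j \<Rightarrow> 'x set) \<Rightarrow> ('x \<Rightarrow> 'x \<Rightarrow> bool) \<Rightarrow> bool" where
  "prefactor le Ms tr \<longleftrightarrow> sys le Ms tr \<and>
     (\<forall>i i' x y. le i i' \<longrightarrow> x \<in> Ms i' \<longrightarrow> y \<in> Ms i \<longrightarrow> (eqv le Ms tr x y \<longleftrightarrow> tr x y))"

definition stable :: "('j \<Rightarrow> 'j \<Rightarrow> bool) \<Rightarrow> ('j \<Rightarrow> 'x set) \<Rightarrow> ('x \<Rightarrow> 'x \<Rightarrow> bool) \<Rightarrow> bool" where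
  "stable le Ms tr \<longleftrightarrow>
     (\<forall>i i' x y z. le i i' \<longrightarrow> x \<in> Ms i' \<longrightarrow> y \<in> Ms i \<longrightarrow> z \<in> Ms i \<longrightarrow>
        tr x y \<longrightarrow> eqv le Ms tr y z \<longrightarrow> tr x z)"

definition emb_sys :: "('j \<Rightarrow> 'j \<Rightarrow> bool) \<Rightarrow> ('j \<Rightarrow> 'x set) \<Rightarrow> ('x \<Rightarrow> 'x \<Rightarrow> bool)
    \<Rightarrow> ('j \<Rightarrow> 'j \<Rightarrow> 'x \<Rightarrow> 'x) \<Rightarrow> bool" where
  "emb_sys le Ms tr emb \<longleftrightarrow>
     (\<forall>i i'. le i i' \<longrightarrow> (\<forall>a\<in>Ms i. emb i i' a \<in> Ms i') \<and>
        (\<forall>a\<in>Ms i. \<forall>b\<in>Ms i. eqv le Ms tr a b \<longrightarrow> eqv le Ms tr (emb i i' a) (emb i i' b))) \<and>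
     (\<forall>i. \<forall>a\<in>Ms i. eqv le Ms tr (emb i i a) a) \<and>
     (\<forall>i i' i''. le i i' \<longrightarrow> le i' i'' \<longrightarrow>
        (\<forall>a\<in>Ms i. eqv le Ms tr (emb i' i'' (emb i i' a)) (emb i i'' a)))"

definition coherent_emb :: "('j \<Rightarrow> 'j \<Rightarrow> bool) \<Rightarrow> ('j \<Rightarrow> 'x set) \<Rightarrow> ('x \<Rightarrow> 'x \<Rightarrow> bool)
    \<Rightarrow> ('j \<Rightarrow> 'j \<Rightarrow> 'x \<Rightarrow> 'x) \<Rightarrow> bool" where
  "coherent_emb le Ms tr emb \<longleftrightarrow>
     (\<forall>i i' i'' a b. le i i' \<longrightarrow> le i' i'' \<longrightarrow> a \<in> Ms i' \<longrightarrow> b \<in> Ms i \<longrightarrow>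
        tr a b \<longrightarrow> tr (emb i' i'' a) b)"

definition direct :: "('j \<Rightarrow> 'j \<Rightarrow> bool) \<Rightarrow> ('j \<Rightarrow> 'x set) \<Rightarrow> ('x \<Rightarrow> 'x \<Rightarrow> bool)
    \<Rightarrow> ('j \<Rightarrow> 'j \<Rightarrow> 'x \<Rightarrow> 'x) \<Rightarrow> bool" where
  "direct le Ms tr emb \<longleftrightarrow> prefactor le Ms tr \<and> emb_sys le Ms tr emb \<and> coherent_emb le Ms tr emb \<and>
     (\<forall>i i' a b. le i i' \<longrightarrow> a \<in> Ms i' \<longrightarrow> b \<in> Ms i \<longrightarrow>
        (tr a b \<longleftrightarrow> eqv le Ms tr a (emb i i' b)))"

definition proj_sys :: "('j \<Rightarrow> 'j \<Rightarrow> bool) \<Rightarrow> ('j \<Rightarrow> 'x set) \<Rightarrow> ('x \<Rightarrow> 'x \<Rightarrow> bool)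
    \<Rightarrow> ('j \<Rightarrow> 'j \<Rightarrow> 'x \<Rightarrow> 'x) \<Rightarrow> bool" where
  "proj_sys le Ms tr proj \<longleftrightarrow>
     (\<forall>i i'. le i i' \<longrightarrow> (\<forall>a\<in>Ms i'. proj i' i a \<in> Ms i) \<and>
        (\<forall>a\<in>Ms i'. \<forall>b\<in>Ms i'. eqv le Ms tr a b \<longrightarrow> eqv le Ms tr (proj i' i a) (proj i' i b))) \<and>
     (\<forall>i. \<forall>a\<in>Ms i. eqv le Ms tr (proj i i a) a) \<and>
     (\<forall>i i' i''. le i i' \<longrightarrow> le i' i'' \<longrightarrow>
        (\<forall>a\<in>Ms i''. eqv le Ms tr (proj i' i (proj i'' i' a)) (proj i'' i a)))"

definition coherent_proj :: "('j \<Rightarrow> 'j \<Rightarrow> bool) \<Rightarrow> ('j \<Rightarrow> 'x set) \<Rightarrow> ('x \<Rightarrow> 'x \<Rightarrow> bool)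
    \<Rightarrow> ('j \<Rightarrow> 'j \<Rightarrow> 'x \<Rightarrow> 'x) \<Rightarrow> bool" where
  "coherent_proj le Ms tr proj \<longleftrightarrow>
     (\<forall>i i' i'' a b. le i i' \<longrightarrow> le i' i'' \<longrightarrow> a \<in> Ms i'' \<longrightarrow> b \<in> Ms i \<longrightarrow>
        tr a b \<longrightarrow> tr (proj i'' i' a) b)"

definition inverse :: "('j \<Rightarrow> 'j \<Rightarrow> bool) \<Rightarrow> ('j \<Rightarrow> 'x set) \<Rightarrow> ('x \<Rightarrow> 'x \<Rightarrow> bool)
    \<Rightarrow> ('j \<Rightarrow> 'j \<Rightarrow> 'x \<Rightarrow> 'x) \<Rightarrow> bool" where
  "inverse le Ms tr proj \<longleftrightarrow> prefactor le Ms tr \<and> proj_sys le Ms tr proj \<and> coherent_proj le Ms tr proj \<and>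
     (\<forall>i i' a b. le i i' \<longrightarrow> a \<in> Ms i' \<longrightarrow> b \<in> Ms i \<longrightarrow>
        (tr a b \<longleftrightarrow> eqv le Ms tr (proj i' i a) b))"

section \<open>Compactification: index set I + {Top}, elements Inl (old) / Inr (target)\<close>

datatype 'i cpt = Idx 'i | Top

fun le_bar :: "('i \<Rightarrow> 'i \<Rightarrow> bool) \<Rightarrow> 'i cpt \<Rightarrow> 'i cpt \<Rightarrow> bool" where
  "le_bar le (Idx i) (Idx j) = le i j"
| "le_bar le _ Top = True"
| "le_bar le Top (Idx _) = False"

fun Ms_bar :: "('i \<Rightarrow> 'a set) \<Rightarrow> 'b set \<Rightarrow> 'i cpt \<Rightarrow> ('a + 'b) set" where
  "Ms_bar Ms Mt (Idx i) = Inl ` Ms i"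
| "Ms_bar Ms Mt Top = Inr ` Mt"

fun tr_bar :: "('a \<Rightarrow> 'a \<Rightarrow> bool) \<Rightarrow> ('b \<Rightarrow> 'a \<Rightarrow> bool) \<Rightarrow> 'a + 'b \<Rightarrow> 'a + 'b \<Rightarrow> bool" where
  "tr_bar tr ttr (Inl x) (Inl y) = tr x y"
| "tr_bar tr ttr (Inr a) (Inl y) = ttr a y"
| "tr_bar tr ttr (Inr a) (Inr b) = (a = b)"
| "tr_bar tr ttr (Inl x) (Inr b) = False"

text \<open>Extension of the embeddings by Emb i = emb_{i,top}; irrelevant arguments are mapped to themselves.\<close>
fun emb_bar :: "('i \<Rightarrow> 'i \<Rightarrow> 'a \<Rightarrow> 'a) \<Rightarrow> ('i \<Rightarrow> 'a \<Rightarrow> 'b) \<Rightarrow> 'i cpt \<Rightarrow> 'i cpt \<Rightarrow> 'a + 'b \<Rightarrow> 'a + 'b" where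
  "emb_bar emb Emb (Idx i) (Idx i') (Inl a) = Inl (emb i i' a)"
| "emb_bar emb Emb (Idx i) Top (Inl a) = Inr (Emb i a)"
| "emb_bar emb Emb _ _ x = x"

text \<open>Extension of the projections by Proj i = proj_{top,i}.\<close>
fun proj_bar :: "('i \<Rightarrow> 'i \<Rightarrow> 'a \<Rightarrow> 'a) \<Rightarrow> ('i \<Rightarrow> 'b \<Rightarrow> 'a) \<Rightarrow> 'i cpt \<Rightarrow> 'i cpt \<Rightarrow> 'a + 'b \<Rightarrow> 'a + 'b" where
  "proj_bar proj Proj (Idx i') (Idx i) (Inl a) = Inl (proj i' i a)"
| "proj_bar proj Proj Top (Idx i) (Inr a) = Inl (Proj i a)"
| "proj_bar proj Proj _ _ x = x"

definition Ia :: "('i \<Rightarrow> 'a set) \<Rightarrow> ('b \<Rightarrow> 'a \<Rightarrow> bool) \<Rightarrow> 'b \<Rightarrow> 'i set" where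
  "Ia Ms ttr a = {i. \<exists>x\<in>Ms i. ttr a x}"

definition target :: "('i \<Rightarrow> 'i \<Rightarrow> bool) \<Rightarrow> 'i set set \<Rightarrow> ('i \<Rightarrow> 'a set) \<Rightarrow> ('a \<Rightarrow> 'a \<Rightarrow> bool)
    \<Rightarrow> 'b set \<Rightarrow> ('b \<Rightarrow> 'a \<Rightarrow> bool) \<Rightarrow> bool" where
  "target le F Ms tr Mt ttr \<longleftrightarrow>
     (\<forall>a x. ttr a x \<longrightarrow> a \<in> Mt \<and> (\<exists>i. x \<in> Ms i)) \<and>
     (\<forall>a\<in>Mt. Ia Ms ttr a \<in> F) \<and>
     prefactor (le_bar le) (Ms_bar Ms Mt) (tr_bar tr ttr)"

definition consistent :: "('i \<Rightarrow> 'i \<Rightarrow> bool) \<Rightarrow> 'i set set \<Rightarrow> ('i \<Rightarrow> 'a set) \<Rightarrow> ('a \<Rightarrow> 'a \<Rightarrow> bool)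
    \<Rightarrow> 'a set \<Rightarrow> bool" where
  "consistent le F Ms tr \<alpha> \<longleftrightarrow>
     \<alpha> \<subseteq> (\<Union>i. Ms i) \<and>
     (\<forall>i i'. le i i' \<longrightarrow> (\<forall>x\<in>\<alpha> \<inter> Ms i'. \<forall>y\<in>\<alpha> \<inter> Ms i. tr x y)) \<and>
     {i. \<alpha> \<inter> Ms i \<noteq> {}} \<in> F"

definition Ext :: "('b \<Rightarrow> 'a \<Rightarrow> bool) \<Rightarrow> 'b \<Rightarrow> 'a set" where
  "Ext ttr a = {x. ttr a x}"

definition sim :: "('i \<Rightarrow> 'i \<Rightarrow> bool) \<Rightarrow> ('i \<Rightarrow> 'a set) \<Rightarrow> ('a \<Rightarrow> 'a \<Rightarrow> bool) \<Rightarrow> 'a set \<Rightarrow> 'a set \<Rightarrow> bool" where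
  "sim le Ms tr \<alpha> \<beta> \<longleftrightarrow> (\<forall>x\<in>\<alpha>. \<forall>y\<in>\<beta>. eqv le Ms tr x y)"

definition maximal :: "('i \<Rightarrow> 'i \<Rightarrow> bool) \<Rightarrow> 'i set set \<Rightarrow> ('i \<Rightarrow> 'a set) \<Rightarrow> ('a \<Rightarrow> 'a \<Rightarrow> bool)
    \<Rightarrow> 'b set \<Rightarrow> ('b \<Rightarrow> 'a \<Rightarrow> bool) \<Rightarrow> bool" where
  "maximal le F Ms tr Mt ttr \<longleftrightarrow>
     (\<forall>a\<in>Mt. consistent le F Ms tr (Ext ttr a) \<and>
        (\<forall>\<beta>. consistent le F Ms tr \<beta> \<longrightarrow> Ext ttr a \<subseteq> \<beta> \<longrightarrow> \<beta> = Ext ttr a))"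

definition extensional :: "('i \<Rightarrow> 'i \<Rightarrow> bool) \<Rightarrow> ('i \<Rightarrow> 'a set) \<Rightarrow> ('a \<Rightarrow> 'a \<Rightarrow> bool)
    \<Rightarrow> 'b set \<Rightarrow> ('b \<Rightarrow> 'a \<Rightarrow> bool) \<Rightarrow> bool" where
  "extensional le Ms tr Mt ttr \<longleftrightarrow>
     (\<forall>a\<in>Mt. \<forall>b\<in>Mt. sim le Ms tr (Ext ttr a) (Ext ttr b) \<longrightarrow> a = b)"

end

theory Submission imports Defs begin

lemma ifD1: "index_family le F \<Longrightarrow> le i i"
  unfolding index_family_def by (elim conjE) (erule allE)
lemma ifD2: "index_family le F \<Longrightarrow> le i j \<Longrightarrow> le j k \<Longrightarrow> le i k"
  unfolding index_family_def by (elim conjE) blast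
lemma ifD3: "index_family le F \<Longrightarrow> \<exists>k. le i k \<and> le j k"
  unfolding index_family_def by (elim conjE) blast
lemma ifD4: "index_family le F \<Longrightarrow> S \<in> F \<Longrightarrow> \<exists>j\<in>S. le i j"
  unfolding index_family_def by (elim conjE) blast
lemma ifD5: "index_family le F \<Longrightarrow> S \<in> F \<Longrightarrow> S \<subseteq> T \<Longrightarrow> T \<in> F"
  unfolding index_family_def by (elim conjE) blast
lemmas ifD = ifD1 ifD2 ifD3 ifD4 ifD5

lemma upper3:
  assumes "index_family le F"
  shows "\<exists>m. le i m \<and> le j m \<and> le k m"
proof -
  obtain a where a: "le i a" "le j a" using ifD(3)[OF assms] by blast
  obtain b where b: "le a b" "le k b" using ifD(3)[OF assms] by blast
  show ?thesis using a b ifD(2)[OF assms] by blast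
qed

lemma pf_refl: "prefactor le Ms tr \<Longrightarrow> x \<in> Ms i \<Longrightarrow> tr x x"
  unfolding prefactor_def sys_def by blast

lemma pf: "prefactor le Ms tr \<Longrightarrow> le i i' \<Longrightarrow> x \<in> Ms i' \<Longrightarrow> y \<in> Ms i \<Longrightarrow> eqv le Ms tr x y \<Longrightarrow> tr x y"
  unfolding prefactor_def by blast

lemma pf2: "prefactor le Ms tr \<Longrightarrow> le i i' \<Longrightarrow> x \<in> Ms i' \<Longrightarrow> y \<in> Ms i \<Longrightarrow> tr x y \<Longrightarrow> eqv le Ms tr x y"
  unfolding prefactor_def by blast

lemma eqvI: "x \<in> Ms i \<Longrightarrow> y \<in> Ms j \<Longrightarrow> le i k \<Longrightarrow> le j k \<Longrightarrow> c \<in> Ms k \<Longrightarrow> tr c x \<Longrightarrow> tr c y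
   \<Longrightarrow> eqv le Ms tr x y"
  unfolding eqv_def by blast

lemma same_sym:
  assumes F: "index_family le F" and P: "prefactor le Ms tr" and x: "x \<in> Ms i" and y: "y \<in> Ms i" and t: "tr x y"
  shows "tr y x"
proof -
  have "eqv le Ms tr y x"
    by (rule eqvI[where Ms=Ms and i=i and j=i and k=i and le=le and tr=tr, OF y x ifD1[OF F] ifD1[OF F] x t pf_refl[OF P x]])
  then show ?thesis by (rule pf[OF P ifD1[OF F] y x])
qed

lemma same_trans:
  assumes F: "index_family le F" and P: "prefactor le Ms tr" and x: "x \<in> Ms i" and y: "y \<in> Ms i" and z: "z \<in> Ms i"
    and t1: "tr x y" and t2: "tr y z"
  shows "tr x z"
proof -
  have "tr y x" by (rule same_sym[OF F P x y t1])
  then have "eqv le Ms tr x z"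
    by (rule eqvI[where Ms=Ms and i=i and j=i and k=i and le=le and tr=tr, OF x z ifD1[OF F] ifD1[OF F] y _ t2])
  then show ?thesis by (rule pf[OF P ifD1[OF F] x z])
qed

lemma tgt_dom: "target le F Ms tr Mt ttr \<Longrightarrow> ttr a x \<Longrightarrow> a \<in> Mt \<and> (\<exists>i. x \<in> Ms i)"
  unfolding target_def by blast

lemma tgt_pf: "target le F Ms tr Mt ttr \<Longrightarrow> prefactor (le_bar le) (Ms_bar Ms Mt) (tr_bar tr ttr)"
  unfolding target_def by blast

lemma ext_tr:
  assumes T: "target le F Ms tr Mt ttr" and au: "ttr a u" and ay: "ttr a y" and u: "u \<in> Ms m" and y: "y \<in> Ms l" and lm: "le l m"
  shows "tr u y"
proof -
  have a: "a \<in> Mt" using tgt_dom[OF T au] by blast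
  have u': "Inl u \<in> Ms_bar Ms Mt (Idx m)" using u by simp
  have y': "Inl y \<in> Ms_bar Ms Mt (Idx l)" using y by simp
  have a': "Inr a \<in> Ms_bar Ms Mt Top" using a by simp
  have lm': "le_bar le (Idx l) (Idx m)" using lm by simp
  have "eqv (le_bar le) (Ms_bar Ms Mt) (tr_bar tr ttr) (Inl u) (Inl y)"
    by (rule eqvI[where Ms="Ms_bar Ms Mt" and i="Idx m" and j="Idx l" and k=Top and c="Inr a"
          and le="le_bar le" and tr="tr_bar tr ttr", OF u' y' _ _ a']) (simp_all add: au ay)
  then have "tr_bar tr ttr (Inl u) (Inl y)"
    by (rule pf[OF tgt_pf[OF T] lm' u' y'])
  then show ?thesis by simp
qed

lemma ext_in:
  assumes "index_family le F" "target le F Ms tr Mt ttr" "a \<in> Mt"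
  shows "\<exists>j u. le i j \<and> u \<in> Ms j \<and> ttr a u"
proof -
  have "Ia Ms ttr a \<in> F" using assms unfolding target_def by blast
  then obtain j where "j \<in> Ia Ms ttr a" "le i j" using ifD(4)[OF assms(1)] by blast
  then show ?thesis unfolding Ia_def by blast
qed

lemma ext_in3:
  assumes "index_family le F" "target le F Ms tr Mt ttr" "a \<in> Mt"
  shows "\<exists>j u. le i j \<and> le i' j \<and> le i'' j \<and> u \<in> Ms j \<and> ttr a u"
proof -
  obtain m where m: "le i m" "le i' m" "le i'' m" using upper3[OF assms(1)] by blast
  obtain j u where "le m j" "u \<in> Ms j" "ttr a u" using ext_in[OF assms] by blast
  then show ?thesis using m ifD(2)[OF assms(1)] by blast
qed

lemma eqv_Inl_bar:
  assumes "eqv le Ms tr y z"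
  shows "eqv (le_bar le) (Ms_bar Ms Mt) (tr_bar tr ttr) (Inl y) (Inl z)"
proof -
  from assms obtain i j k c where "y \<in> Ms i" "z \<in> Ms j" "le i k" "le j k" "c \<in> Ms k" "tr c y" "tr c z"
    unfolding eqv_def by blast
  then show ?thesis
    by (intro eqvI[where i="Idx i" and j="Idx j" and k="Idx k" and c="Inl c"]) auto
qed

lemma eqv_bar_Inl:
  assumes "index_family le F" "target le F Ms tr Mt ttr"
    "eqv (le_bar le) (Ms_bar Ms Mt) (tr_bar tr ttr) (Inl y) (Inl z)"
  shows "eqv le Ms tr y z"
proof -
  from assms(3) obtain i j k c where h: "Inl y \<in> Ms_bar Ms Mt i" "Inl z \<in> Ms_bar Ms Mt j"
    "le_bar le i k" "le_bar le j k" "c \<in> Ms_bar Ms Mt k"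
    "tr_bar tr ttr c (Inl y)" "tr_bar tr ttr c (Inl z)"
    unfolding eqv_def by blast
  obtain i0 where i0: "i = Idx i0" "y \<in> Ms i0" using h(1) by (cases i) auto
  obtain j0 where j0: "j = Idx j0" "z \<in> Ms j0" using h(2) by (cases j) auto
  show ?thesis
  proof (cases k)
    case (Idx k0)
    then obtain c0 where "c = Inl c0" "c0 \<in> Ms k0" using h(5) by auto
    then show ?thesis using h i0 j0 Idx by (intro eqvI[where i=i0 and j=j0 and k=k0 and c=c0]) auto
  next
    case Top
    then obtain a where a: "c = Inr a" "a \<in> Mt" using h(5) by auto
    have ty: "ttr a y" and tz: "ttr a z" using h a by auto
    obtain m w where w: "le i0 m" "le j0 m" "w \<in> Ms m" "ttr a w"
      using ext_in3[OF assms(1,2) a(2), of i0 j0 j0] by blast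
    have "tr w y" "tr w z" using ext_tr[OF assms(2)] w ty tz i0 j0 by blast+
    then show ?thesis using w i0 j0 by (intro eqvI[where i=i0 and j=j0 and k=m and c=w]) auto
  qed
qed

lemma eqv_bar_Inr:
  assumes "eqv (le_bar le) (Ms_bar Ms Mt) (tr_bar tr ttr) (Inr a) (Inr b)"
  shows "a = b"
proof -
  from assms obtain c where "tr_bar tr ttr c (Inr a)" "tr_bar tr ttr c (Inr b)"
    unfolding eqv_def by blast
  then show ?thesis by (cases c) auto
qed

lemma eqv_bar_Inr_refl:
  assumes "a \<in> Mt"
  shows "eqv (le_bar le) (Ms_bar Ms Mt) (tr_bar tr ttr) (Inr a) (Inr a)"
  using assms by (intro eqvI[where i=Top and j=Top and k=Top and c="Inr a"]) auto

lemma eqv_bar_Inr_iff: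
  assumes "a \<in> Mt"
  shows "eqv (le_bar le) (Ms_bar Ms Mt) (tr_bar tr ttr) (Inr a) (Inr b) \<longleftrightarrow> a = b"
  using eqv_bar_Inr[of le Ms Mt tr ttr a b] eqv_bar_Inr_refl[OF assms, of le Ms tr ttr] by blast

lemma eqv_bar_Inl_iff:
  assumes "index_family le F" "target le F Ms tr Mt ttr"
  shows "eqv (le_bar le) (Ms_bar Ms Mt) (tr_bar tr ttr) (Inl y) (Inl z) \<longleftrightarrow> eqv le Ms tr y z"
  using eqv_bar_Inl[OF assms, of y z] eqv_Inl_bar[of le Ms tr y z Mt ttr] by blast

lemma addmax:
  assumes F: "index_family le F" and P: "prefactor le Ms tr" and T: "target le F Ms tr Mt ttr"
    and Mx: "maximal le F Ms tr Mt ttr" and a: "a \<in> Mt" and z: "z \<in> Ms i"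
    and H: "\<And>m u. le i m \<Longrightarrow> u \<in> Ms m \<Longrightarrow> ttr a u \<Longrightarrow> tr u z"
  shows "ttr a z"
proof -
  have cE: "consistent le F Ms tr (Ext ttr a)"
    using Mx a unfolding maximal_def by blast
  have mE: "\<And>\<beta>. consistent le F Ms tr \<beta> \<Longrightarrow> Ext ttr a \<subseteq> \<beta> \<Longrightarrow> \<beta> = Ext ttr a"
    using Mx a unfolding maximal_def by blast
  define b where "b = insert z (Ext ttr a)"
  have key: "tr x y" if lt: "le l l'" and xb: "x \<in> b" and xl: "x \<in> Ms l'" and yb: "y \<in> b" and yl: "y \<in> Ms l" for l l' x y
  proof -
    obtain m u where u: "le i m" "le l m" "le l' m" "u \<in> Ms m" "ttr a u"
      using ext_in3[OF F T a, of i l l'] by blast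
    have gen: "tr u v" if "v \<in> b" "v \<in> Ms l0" "le l0 m" for v l0
    proof (cases "v = z")
      case True then show ?thesis using H u(1,4,5) by blast
    next
      case False then have "ttr a v" using that(1) unfolding b_def Ext_def by blast
      then show ?thesis using ext_tr[OF T u(5) _ u(4) that(2) that(3)] by blast
    qed
    have "tr u x" using gen[OF xb xl u(3)] .
    moreover have "tr u y" using gen[OF yb yl u(2)] .
    ultimately have "eqv le Ms tr x y" using eqvI[where Ms=Ms and le=le and tr=tr and i=l' and j=l and k=m, OF xl yl u(3) u(2) u(4)] by blast
    then show ?thesis using pf[OF P lt xl yl] by blast
  qed
  have s1: "b \<subseteq> (\<Union>i. Ms i)" using cE z unfolding consistent_def b_def by blast
  have s2: "{i. Ext ttr a \<inter> Ms i \<noteq> {}} \<in> F" using cE unfolding consistent_def by blast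
  have "{i. Ext ttr a \<inter> Ms i \<noteq> {}} \<subseteq> {i. b \<inter> Ms i \<noteq> {}}" unfolding b_def by blast
  then have s3: "{i. b \<inter> Ms i \<noteq> {}} \<in> F" using ifD(5)[OF F s2] by blast
  have "consistent le F Ms tr b" unfolding consistent_def
  proof (intro conjI allI impI ballI s1 s3)
    fix l l' x y assume "le l l'" "x \<in> b \<inter> Ms l'" "y \<in> b \<inter> Ms l"
    then show "tr x y" using key by blast
  qed
  moreover have "Ext ttr a \<subseteq> b" unfolding b_def by blast
  ultimately have "b = Ext ttr a" using mE by blast
  then show ?thesis unfolding b_def Ext_def by blast
qed

lemma stableD:
  "stable le Ms tr \<Longrightarrow> le i i' \<Longrightarrow> x \<in> Ms i' \<Longrightarrow> y \<in> Ms i \<Longrightarrow> z \<in> Ms i \<Longrightarrow>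
        tr x y \<Longrightarrow> eqv le Ms tr y z \<Longrightarrow> tr x z"
  unfolding Defs.stable_def by blast

lemma stable_addmax:
  assumes F: "index_family le F" and P: "prefactor le Ms tr" and T: "target le F Ms tr Mt ttr"
    and S: "stable le Ms tr" and Mx: "maximal le F Ms tr Mt ttr"
    and a: "a \<in> Mt" and ty: "ttr a y" and y: "y \<in> Ms i" and z: "z \<in> Ms i" and e: "eqv le Ms tr y z"
  shows "ttr a z"
proof (rule addmax[OF F P T Mx a z])
  fix m u assume u: "le i m" "u \<in> Ms m" "ttr a u"
  have "tr u y" using ext_tr[OF T u(3) ty u(2) y u(1)] .
  then show "tr u z" using stableD[OF S u(1) u(2) y z _ e] by blast
qed

lemma part1:
  assumes F: "index_family le F" and P: "prefactor le Ms tr" and T: "target le F Ms tr Mt ttr"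
    and S: "stable le Ms tr" and Mx: "maximal le F Ms tr Mt ttr"
  shows "stable (le_bar le) (Ms_bar Ms Mt) (tr_bar tr ttr)"
  unfolding Defs.stable_def
proof (intro allI impI)
  fix i i' x y z
  assume h: "le_bar le i i'" "x \<in> Ms_bar Ms Mt i'" "y \<in> Ms_bar Ms Mt i" "z \<in> Ms_bar Ms Mt i"
    "tr_bar tr ttr x y" "eqv (le_bar le) (Ms_bar Ms Mt) (tr_bar tr ttr) y z"
  show "tr_bar tr ttr x z"
  proof (cases i')
    case (Idx i0')
    then obtain i0 where i: "i = Idx i0" "le i0 i0'" using h(1) by (cases i) auto
    obtain x0 y0 z0 where xyz: "x = Inl x0" "y = Inl y0" "z = Inl z0" "x0 \<in> Ms i0'" "y0 \<in> Ms i0" "z0 \<in> Ms i0"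
      using h(2-4) i Idx by auto
    have "eqv le Ms tr y0 z0" using eqv_bar_Inl[OF F T] h(6) xyz by blast
    moreover have "tr x0 y0" using h(5) xyz by simp
    ultimately have "tr x0 z0" using stableD[OF S i(2)] xyz by blast
    then show ?thesis using xyz by simp
  next
    case Top
    then obtain a where x: "x = Inr a" "a \<in> Mt" using h(2) by auto
    show ?thesis
    proof (cases i)
      case (Idx i0)
      obtain y0 z0 where yz: "y = Inl y0" "z = Inl z0" "y0 \<in> Ms i0" "z0 \<in> Ms i0"
        using h(3-4) Idx by auto
      have "eqv le Ms tr y0 z0" using eqv_bar_Inl[OF F T] h(6) yz by blast
      moreover have "ttr a y0" using h(5) x yz by simp
      ultimately have "ttr a z0" using stable_addmax[OF F P T S Mx x(2)] yz by blast
      then show ?thesis using x yz by simp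
    next
      case Top
      obtain b c where yz: "y = Inr b" "z = Inr c" using h(3-4) Top by auto
      have "b = c" using eqv_bar_Inr h(6) yz by metis
      then show ?thesis using h(5) x yz by simp
    qed
  qed
qed


lemma Emb_ttr:
  assumes C: "coherent_emb (le_bar le) (Ms_bar Ms Mt) (tr_bar tr ttr) (emb_bar emb Emb)"
    and P: "prefactor le Ms tr" and F: "index_family le F" and b: "b \<in> Ms i"
  shows "ttr (Emb i b) b"
proof -
  have "tr_bar tr ttr (emb_bar emb Emb (Idx i) Top (Inl b)) (Inl b)"
    using C b pf_refl[OF P b] ifD(1)[OF F, of i] unfolding coherent_emb_def
    by (metis Ms_bar.simps(1) image_eqI le_bar.simps(1) le_bar.simps(2) tr_bar.simps(1))
  then show ?thesis by simp
qed

lemma Emb_eq: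
  assumes F: "index_family le F" and P: "prefactor le Ms tr" and T: "target le F Ms tr Mt ttr"
    and D: "direct le Ms tr emb"
    and E: "emb_sys (le_bar le) (Ms_bar Ms Mt) (tr_bar tr ttr) (emb_bar emb Emb)"
    and C: "coherent_emb (le_bar le) (Ms_bar Ms Mt) (tr_bar tr ttr) (emb_bar emb Emb)"
    and X: "extensional le Ms tr Mt ttr"
    and tab: "ttr a b" and b: "b \<in> Ms i"
  shows "a = Emb i b"
proof -
  have a: "a \<in> Mt" using tgt_dom[OF T tab] by blast
  have "emb_bar emb Emb (Idx i) Top (Inl b) \<in> Ms_bar Ms Mt Top"
    using E b unfolding emb_sys_def by (metis Ms_bar.simps(1) image_eqI le_bar.simps(2))
  then have a': "Emb i b \<in> Mt" by auto
  have "sim le Ms tr (Ext ttr a) (Ext ttr (Emb i b))"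
    unfolding sim_def Ext_def
  proof (intro ballI, simp)
    fix x y assume x: "ttr a x" and y: "ttr (Emb i b) y"
    obtain j where j: "x \<in> Ms j" using tgt_dom[OF T x] by blast
    obtain j' where j': "y \<in> Ms j'" using tgt_dom[OF T y] by blast
    obtain m u where u: "le i m" "le j m" "le j' m" "u \<in> Ms m" "ttr a u"
      using ext_in3[OF F T a, of i j j'] by blast
    have tub: "tr u b" using ext_tr[OF T u(5) tab u(4) b u(1)] .
    have ESo: "emb_sys le Ms tr emb" using D unfolding direct_def by blast
    have eb: "emb i m b \<in> Ms m" using ESo u(1) b unfolding emb_sys_def by blast
    have "eqv le Ms tr u (emb i m b)" using D tub u b unfolding direct_def by blast
    then have "eqv (le_bar le) (Ms_bar Ms Mt) (tr_bar tr ttr) (Inl u) (Inl (emb i m b))"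
      by (rule eqv_Inl_bar)
    then have "eqv (le_bar le) (Ms_bar Ms Mt) (tr_bar tr ttr)
        (emb_bar emb Emb (Idx m) Top (Inl u)) (emb_bar emb Emb (Idx m) Top (Inl (emb i m b)))"
      using E u(4) eb unfolding emb_sys_def
      by (metis Ms_bar.simps(1) image_eqI le_bar.simps(2))
    then have e1: "Emb m u = Emb m (emb i m b)" using eqv_bar_Inr by fastforce
    have "eqv (le_bar le) (Ms_bar Ms Mt) (tr_bar tr ttr)
        (emb_bar emb Emb (Idx m) Top (emb_bar emb Emb (Idx i) (Idx m) (Inl b))) (emb_bar emb Emb (Idx i) Top (Inl b))"
      using E b u(1) unfolding emb_sys_def
      by (metis Ms_bar.simps(1) image_eqI le_bar.simps(1) le_bar.simps(2))
    then have e2: "Emb m (emb i m b) = Emb i b" using eqv_bar_Inr by fastforce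
    have "ttr (Emb m u) u" using Emb_ttr[OF C P F u(4)] .
    then have tu: "ttr (Emb i b) u" using e1 e2 by simp
    have "tr u x" using ext_tr[OF T u(5) x u(4) j u(2)] .
    moreover have "tr u y" using ext_tr[OF T tu y u(4) j' u(3)] .
    ultimately show "eqv le Ms tr x y" using j j' u by (intro eqvI[where i=j and j=j' and k=m and c=u]) auto
  qed
  then show ?thesis using X a a' unfolding extensional_def by blast
qed


lemma directD:
  assumes "direct le Ms tr emb" "le i i'" "a \<in> Ms i'" "b \<in> Ms i"
  shows "tr a b \<longleftrightarrow> eqv le Ms tr a (emb i i' b)"
  using assms unfolding direct_def by (elim conjE) blast

lemma direct_es: "direct le Ms tr emb \<Longrightarrow> emb_sys le Ms tr emb"
  unfolding direct_def by (elim conjE)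

lemma emb_mem: "emb_sys le Ms tr emb \<Longrightarrow> le i i' \<Longrightarrow> a \<in> Ms i \<Longrightarrow> emb i i' a \<in> Ms i'"
  unfolding emb_sys_def by (elim conjE) blast

lemma part2:
  assumes F: "index_family le F" and P: "prefactor le Ms tr" and T: "target le F Ms tr Mt ttr"
    and D: "direct le Ms tr emb"
    and E: "emb_sys (le_bar le) (Ms_bar Ms Mt) (tr_bar tr ttr) (emb_bar emb Emb)"
    and C: "coherent_emb (le_bar le) (Ms_bar Ms Mt) (tr_bar tr ttr) (emb_bar emb Emb)"
    and X: "extensional le Ms tr Mt ttr"
  shows "direct (le_bar le) (Ms_bar Ms Mt) (tr_bar tr ttr) (emb_bar emb Emb)
     \<and> (\<forall>a\<in>Mt. \<exists>S. S \<noteq> {} \<and> upclosed le S \<and> S \<subseteq> Ia Ms ttr a)"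
proof
  have PB: "prefactor (le_bar le) (Ms_bar Ms Mt) (tr_bar tr ttr)" using tgt_pf[OF T] .
  have iff: "tr_bar tr ttr x y \<longleftrightarrow> eqv (le_bar le) (Ms_bar Ms Mt) (tr_bar tr ttr) x (emb_bar emb Emb i i' y)"
    if h: "le_bar le i i'" "x \<in> Ms_bar Ms Mt i'" "y \<in> Ms_bar Ms Mt i" for i i' x y
  proof (cases i')
    case (Idx i0')
    then obtain i0 where i: "i = Idx i0" "le i0 i0'" using h(1) by (cases i) auto
    obtain x0 y0 where xy: "x = Inl x0" "y = Inl y0" "x0 \<in> Ms i0'" "y0 \<in> Ms i0"
      using h(2-3) i Idx by auto
    have "tr x0 y0 \<longleftrightarrow> eqv le Ms tr x0 (emb i0 i0' y0)" using directD[OF D i(2) xy(3) xy(4)] .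
    then show ?thesis using xy i Idx eqv_bar_Inl_iff[OF F T] by simp
  next
    case Top
    then obtain a where x: "x = Inr a" "a \<in> Mt" using h(2) by auto
    show ?thesis
    proof (cases i)
      case (Idx i0)
      obtain y0 where y: "y = Inl y0" "y0 \<in> Ms i0" using h(3) Idx by auto
      have "emb_bar emb Emb (Idx i0) Top (Inl y0) \<in> Ms_bar Ms Mt Top"
        using E y unfolding emb_sys_def by (metis Ms_bar.simps(1) image_eqI le_bar.simps(2))
      then have a': "Emb i0 y0 \<in> Mt" by auto
      have "ttr a y0 \<longleftrightarrow> a = Emb i0 y0"
        using Emb_eq[OF F P T D E C X, of a y0 i0] Emb_ttr[OF C P F y(2)] y by blast
      then show ?thesis using x y Top Idx eqv_bar_Inr_iff[OF x(2), of le Ms tr ttr "Emb i0 y0"] by simp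
    next
      case Top
      obtain b where y: "y = Inr b" using h(3) Top by auto
      then show ?thesis using x Top eqv_bar_Inr_iff[OF x(2), of le Ms tr ttr b] by simp
    qed
  qed
  show "direct (le_bar le) (Ms_bar Ms Mt) (tr_bar tr ttr) (emb_bar emb Emb)"
    unfolding direct_def
  proof (intro conjI PB E C allI impI)
    fix i i' a b assume "le_bar le i i'" "a \<in> Ms_bar Ms Mt i'" "b \<in> Ms_bar Ms Mt i"
    then show "tr_bar tr ttr a b \<longleftrightarrow> eqv (le_bar le) (Ms_bar Ms Mt) (tr_bar tr ttr) a (emb_bar emb Emb i i' b)"
      by (rule iff)
  qed
next
  show "\<forall>a\<in>Mt. \<exists>S. S \<noteq> {} \<and> upclosed le S \<and> S \<subseteq> Ia Ms ttr a"
  proof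
    fix a assume a: "a \<in> Mt"
    obtain i0 b where b: "b \<in> Ms i0" "ttr a b" using ext_in[OF F T a] by blast
    have ab: "a = Emb i0 b" using Emb_eq[OF F P T D E C X b(2) b(1)] .
    have ESo: "emb_sys le Ms tr emb" using direct_es[OF D] .
    have "j \<in> Ia Ms ttr a" if j: "le i0 j" for j
    proof -
      have eb: "emb i0 j b \<in> Ms j" using emb_mem[OF ESo j b(1)] .
      have "eqv (le_bar le) (Ms_bar Ms Mt) (tr_bar tr ttr)
        (emb_bar emb Emb (Idx j) Top (emb_bar emb Emb (Idx i0) (Idx j) (Inl b))) (emb_bar emb Emb (Idx i0) Top (Inl b))"
        using E b j unfolding emb_sys_def
        by (metis Ms_bar.simps(1) image_eqI le_bar.simps(1) le_bar.simps(2))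
      then have "Emb j (emb i0 j b) = Emb i0 b" using eqv_bar_Inr by fastforce
      then have "ttr a (emb i0 j b)" using Emb_ttr[OF C P F eb] ab by simp
      then show ?thesis using eb unfolding Ia_def by blast
    qed
    then have s1: "{j. le i0 j} \<subseteq> Ia Ms ttr a" by blast
    have s2: "upclosed le {j. le i0 j}" unfolding upclosed_def using ifD2[OF F] by blast
    have s3: "{j. le i0 j} \<noteq> {}" using ifD1[OF F, of i0] by blast
    show "\<exists>S. S \<noteq> {} \<and> upclosed le S \<and> S \<subseteq> Ia Ms ttr a"
      by (rule exI[of _ "{j. le i0 j}"]) (intro conjI s1 s2 s3)
  qed
qed


lemma inv_stable:
  assumes F: "index_family le F" and I: "inverse le Ms tr proj"
  shows "stable le Ms tr"
  unfolding Defs.stable_def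
proof (intro allI impI)
  fix i i' x y z assume h: "le i i'" "x \<in> Ms i'" "y \<in> Ms i" "z \<in> Ms i" "tr x y" "eqv le Ms tr y z"
  have P: "prefactor le Ms tr" using I unfolding Defs.inverse_def by blast
  have p: "proj i' i x \<in> Ms i" using I h unfolding Defs.inverse_def proj_sys_def by blast
  have "eqv le Ms tr (proj i' i x) y" using I h unfolding Defs.inverse_def by blast
  then have "tr (proj i' i x) y" using pf[OF P ifD(1)[OF F] p h(3)] by blast
  moreover have "tr y z" using pf[OF P ifD(1)[OF F] h(3) h(4) h(6)] .
  ultimately have "tr (proj i' i x) z" using same_trans[OF F P p h(3) h(4)] by blast
  then have "eqv le Ms tr (proj i' i x) z" using pf2[OF P ifD(1)[OF F] p h(4)] by blast
  then show "tr x z" using I h unfolding Defs.inverse_def by blast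
qed

lemma inv_trans:
  assumes F: "index_family le F" and I: "inverse le Ms tr proj"
    and h: "le i j" "le j m" "u \<in> Ms m" "w \<in> Ms j" "z \<in> Ms i" "tr u w" "tr w z"
  shows "tr u z"
proof -
  have P: "prefactor le Ms tr" using I unfolding Defs.inverse_def by blast
  have PS: "proj_sys le Ms tr proj" using I unfolding Defs.inverse_def by blast
  have lim: "le i m" using ifD(2)[OF F h(1,2)] .
  have m1: "proj m j u \<in> Ms j" using PS h unfolding proj_sys_def by blast
  have m2: "proj m i u \<in> Ms i" using PS h lim unfolding proj_sys_def by blast
  have m3: "proj j i (proj m j u) \<in> Ms i" using PS h m1 unfolding proj_sys_def by blast
  have m4: "proj j i w \<in> Ms i" using PS h unfolding proj_sys_def by blast
  have "eqv le Ms tr (proj m j u) w" using I h unfolding Defs.inverse_def by blast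
  then have "eqv le Ms tr (proj j i (proj m j u)) (proj j i w)"
    using PS h m1 unfolding proj_sys_def by blast
  then have t1: "tr (proj j i (proj m j u)) (proj j i w)" using pf[OF P ifD(1)[OF F] m3 m4] by blast
  have "eqv le Ms tr (proj j i (proj m j u)) (proj m i u)" using PS h unfolding proj_sys_def by blast
  then have "tr (proj j i (proj m j u)) (proj m i u)" using pf[OF P ifD(1)[OF F] m3 m2] by blast
  then have t2: "tr (proj m i u) (proj j i (proj m j u))" using same_sym[OF F P m3 m2] by blast
  have "eqv le Ms tr (proj j i w) z" using I h unfolding Defs.inverse_def by blast
  then have t3: "tr (proj j i w) z" using pf[OF P ifD(1)[OF F] m4 h(5)] by blast
  have "tr (proj m i u) z"
    using same_trans[OF F P m2 m3 h(5) t2 same_trans[OF F P m3 m4 h(5) t1 t3]] .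
  then have "eqv le Ms tr (proj m i u) z" using pf2[OF P ifD(1)[OF F] m2 h(5)] by blast
  then show ?thesis using I h lim unfolding Defs.inverse_def by blast
qed

lemma inv_univ:
  assumes F: "index_family le F" and P: "prefactor le Ms tr" and T: "target le F Ms tr Mt ttr"
    and I: "inverse le Ms tr proj" and Mx: "maximal le F Ms tr Mt ttr" and a: "a \<in> Mt"
  shows "\<exists>z\<in>Ms i. ttr a z"
proof -
  obtain j w where w: "le i j" "w \<in> Ms j" "ttr a w" using ext_in[OF F T a] by blast
  have PS: "proj_sys le Ms tr proj" using I unfolding Defs.inverse_def by blast
  have z: "proj j i w \<in> Ms i" using PS w unfolding proj_sys_def by blast
  have "eqv le Ms tr (proj j i w) (proj j i w)" using pf2[OF P ifD(1)[OF F] z z pf_refl[OF P z]] .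
  then have twz: "tr w (proj j i w)" using I w z unfolding Defs.inverse_def by blast
  have "ttr a (proj j i w)"
  proof (rule addmax[OF F P T Mx a z])
    fix m u assume u: "le i m" "u \<in> Ms m" "ttr a u"
    obtain m' u' where u': "le m m'" "le j m'" "le j m'" "u' \<in> Ms m'" "ttr a u'"
      using ext_in3[OF F T a, of m j j] by blast
    have "tr u' w" using ext_tr[OF T u'(5) w(3) u'(4) w(2) u'(2)] .
    then have "tr u' (proj j i w)" using inv_trans[OF F I w(1) u'(2) u'(4) w(2) z _ twz] by blast
    moreover have "tr u' u" using ext_tr[OF T u'(5) u(3) u'(4) u(2) u'(1)] .
    moreover have "le i m'" using ifD(2)[OF F u(1) u'(1)] .
    ultimately have "eqv le Ms tr u (proj j i w)" using u u' z
      by (intro eqvI[where i=m and j=i and k=m' and c=u']) auto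
    then show "tr u (proj j i w)" using pf[OF P u(1) u(2) z] by blast
  qed
  then show ?thesis using z by blast
qed

lemma part3:
  assumes F: "index_family le F" and P: "prefactor le Ms tr" and T: "target le F Ms tr Mt ttr"
    and I: "inverse le Ms tr proj"
    and E: "proj_sys (le_bar le) (Ms_bar Ms Mt) (tr_bar tr ttr) (proj_bar proj Proj)"
    and C: "coherent_proj (le_bar le) (Ms_bar Ms Mt) (tr_bar tr ttr) (proj_bar proj Proj)"
    and Mx: "maximal le F Ms tr Mt ttr"
  shows "inverse (le_bar le) (Ms_bar Ms Mt) (tr_bar tr ttr) (proj_bar proj Proj)
     \<and> (\<forall>a\<in>Mt. Ia Ms ttr a = UNIV)"
proof
  have PB: "prefactor (le_bar le) (Ms_bar Ms Mt) (tr_bar tr ttr)" using tgt_pf[OF T] .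
  have S: "stable le Ms tr" using inv_stable[OF F I] .
  have Pin: "Proj i a \<in> Ms i" if "a \<in> Mt" for i a
  proof -
    have "proj_bar proj Proj Top (Idx i) (Inr a) \<in> Ms_bar Ms Mt (Idx i)"
      using E that unfolding proj_sys_def by (metis Ms_bar.simps(2) image_eqI le_bar.simps(2))
    then show ?thesis by auto
  qed
  have coh: "tr (Proj i a) b" if "ttr a b" "b \<in> Ms i" "a \<in> Mt" for i a b
  proof -
    have "tr_bar tr ttr (proj_bar proj Proj Top (Idx i) (Inr a)) (Inl b)"
      using C that ifD(1)[OF F, of i] unfolding coherent_proj_def
      by (metis Ms_bar.simps(1) Ms_bar.simps(2) image_eqI le_bar.simps(1) le_bar.simps(2) tr_bar.simps(2))
    then show ?thesis by simp
  qed
  have iff: "tr_bar tr ttr x y \<longleftrightarrow> eqv (le_bar le) (Ms_bar Ms Mt) (tr_bar tr ttr) (proj_bar proj Proj i' i x) y"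
    if h: "le_bar le i i'" "x \<in> Ms_bar Ms Mt i'" "y \<in> Ms_bar Ms Mt i" for i i' x y
  proof (cases i')
    case (Idx i0')
    then obtain i0 where i: "i = Idx i0" "le i0 i0'" using h(1) by (cases i) auto
    obtain x0 y0 where xy: "x = Inl x0" "y = Inl y0" "x0 \<in> Ms i0'" "y0 \<in> Ms i0"
      using h(2-3) i Idx by auto
    have "tr x0 y0 \<longleftrightarrow> eqv le Ms tr (proj i0' i0 x0) y0" using I i xy unfolding Defs.inverse_def by blast
    then show ?thesis using xy i Idx eqv_bar_Inl_iff[OF F T] by simp
  next
    case Top
    then obtain a where x: "x = Inr a" "a \<in> Mt" using h(2) by auto
    show ?thesis
    proof (cases i)
      case (Idx i0)
      obtain y0 where y: "y = Inl y0" "y0 \<in> Ms i0" using h(3) Idx by auto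
      have pa: "Proj i0 a \<in> Ms i0" using Pin x(2) .
      have "ttr a y0 \<longleftrightarrow> eqv le Ms tr (Proj i0 a) y0"
      proof
        assume "ttr a y0"
        then show "eqv le Ms tr (Proj i0 a) y0" using coh x y pf2[OF P ifD(1)[OF F] pa y(2)] by blast
      next
        assume e: "eqv le Ms tr (Proj i0 a) y0"
        obtain z where z: "z \<in> Ms i0" "ttr a z" using inv_univ[OF F P T I Mx x(2)] by blast
        have t1: "tr (Proj i0 a) z" using coh z x by blast
        have t2: "tr (Proj i0 a) y0" using pf[OF P ifD(1)[OF F] pa y(2) e] .
        have "tr z y0" using same_trans[OF F P z(1) pa y(2) same_sym[OF F P pa z(1) t1] t2] .
        then have "eqv le Ms tr z y0" using pf2[OF P ifD(1)[OF F] z(1) y(2)] by blast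
        then show "ttr a y0" using stable_addmax[OF F P T S Mx x(2) z(2) z(1) y(2)] by blast
      qed
      then show ?thesis using x y Top Idx eqv_bar_Inl_iff[OF F T] by simp
    next
      case Top
      obtain b where y: "y = Inr b" using h(3) Top by auto
      then show ?thesis using x Top eqv_bar_Inr_iff[OF x(2), of le Ms tr ttr b] by simp
    qed
  qed
  show "inverse (le_bar le) (Ms_bar Ms Mt) (tr_bar tr ttr) (proj_bar proj Proj)"
    unfolding Defs.inverse_def using PB E C iff by blast
next
  show "\<forall>a\<in>Mt. Ia Ms ttr a = UNIV"
    using inv_univ[OF F P T I Mx] unfolding Ia_def by blast
qed

theorem proposition2p11:
  fixes le :: "'i \<Rightarrow> 'i \<Rightarrow> bool" and F :: "'i set set"
    and Ms :: "'i \<Rightarrow> 'a set" and tr :: "'a \<Rightarrow> 'a \<Rightarrow> bool"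
    and Mt :: "'b set" and ttr :: "'b \<Rightarrow> 'a \<Rightarrow> bool"
    and emb :: "'i \<Rightarrow> 'i \<Rightarrow> 'a \<Rightarrow> 'a" and Emb :: "'i \<Rightarrow> 'a \<Rightarrow> 'b"
    and proj :: "'i \<Rightarrow> 'i \<Rightarrow> 'a \<Rightarrow> 'a" and Proj :: "'i \<Rightarrow> 'b \<Rightarrow> 'a"
  assumes "index_family le F"
    and "prefactor le Ms tr"
    and "target le F Ms tr Mt ttr"
  shows
    "(stable le Ms tr \<and> maximal le F Ms tr Mt ttr
        \<longrightarrow> stable (le_bar le) (Ms_bar Ms Mt) (tr_bar tr ttr))
   \<and> (direct le Ms tr emb
        \<and> emb_sys (le_bar le) (Ms_bar Ms Mt) (tr_bar tr ttr) (emb_bar emb Emb)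
        \<and> coherent_emb (le_bar le) (Ms_bar Ms Mt) (tr_bar tr ttr) (emb_bar emb Emb)
        \<and> extensional le Ms tr Mt ttr
        \<longrightarrow> direct (le_bar le) (Ms_bar Ms Mt) (tr_bar tr ttr) (emb_bar emb Emb)
            \<and> (\<forall>a\<in>Mt. \<exists>S. S \<noteq> {} \<and> upclosed le S \<and> S \<subseteq> Ia Ms ttr a))
   \<and> (inverse le Ms tr proj
        \<and> proj_sys (le_bar le) (Ms_bar Ms Mt) (tr_bar tr ttr) (proj_bar proj Proj)
        \<and> coherent_proj (le_bar le) (Ms_bar Ms Mt) (tr_bar tr ttr) (proj_bar proj Proj)
        \<and> maximal le F Ms tr Mt ttr
        \<longrightarrow> inverse (le_bar le) (Ms_bar Ms Mt) (tr_bar tr ttr) (proj_bar proj Proj)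
            \<and> (\<forall>a\<in>Mt. Ia Ms ttr a = UNIV))"
proof (intro conjI impI)
  assume "stable le Ms tr \<and> maximal le F Ms tr Mt ttr"
  then show "stable (le_bar le) (Ms_bar Ms Mt) (tr_bar tr ttr)"
    using part1[OF assms] by (elim conjE)
next
  assume h: "direct le Ms tr emb
        \<and> emb_sys (le_bar le) (Ms_bar Ms Mt) (tr_bar tr ttr) (emb_bar emb Emb)
        \<and> coherent_emb (le_bar le) (Ms_bar Ms Mt) (tr_bar tr ttr) (emb_bar emb Emb)
        \<and> extensional le Ms tr Mt ttr"
  have r: "direct (le_bar le) (Ms_bar Ms Mt) (tr_bar tr ttr) (emb_bar emb Emb)
     \<and> (\<forall>a\<in>Mt. \<exists>S. S \<noteq> {} \<and> upclosed le S \<and> S \<subseteq> Ia Ms ttr a)"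
    using h by (elim conjE) (rule part2[OF assms])
  show "direct (le_bar le) (Ms_bar Ms Mt) (tr_bar tr ttr) (emb_bar emb Emb)" using r by (rule conjunct1)
  show "\<forall>a\<in>Mt. \<exists>S. S \<noteq> {} \<and> upclosed le S \<and> S \<subseteq> Ia Ms ttr a" using r by (rule conjunct2)
next
  assume h: "inverse le Ms tr proj
        \<and> proj_sys (le_bar le) (Ms_bar Ms Mt) (tr_bar tr ttr) (proj_bar proj Proj)
        \<and> coherent_proj (le_bar le) (Ms_bar Ms Mt) (tr_bar tr ttr) (proj_bar proj Proj)
        \<and> maximal le F Ms tr Mt ttr"
  have r: "inverse (le_bar le) (Ms_bar Ms Mt) (tr_bar tr ttr) (proj_bar proj Proj)
     \<and> (\<forall>a\<in>Mt. Ia Ms ttr a = UNIV)"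
    using h by (elim conjE) (rule part3[OF assms])
  show "inverse (le_bar le) (Ms_bar Ms Mt) (tr_bar tr ttr) (proj_bar proj Proj)" using r by (rule conjunct1)
  show "\<forall>a\<in>Mt. Ia Ms ttr a = UNIV" using r by (rule conjunct2)
qed

end
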